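(* In the polynomial ring $\mathbb{Z}_2[y_2,y_3]$ define a sequence $(z_n)_{n\geq1}$ by $z_1=0$, $z_2=1$, $z_3=0$ and $z_n=y_2z_{n-2}+y_3z_{n-3}$ for $n\geq4$. Then $z_n\neq 0$ for every $n\geq1$ that is not of the form $2^i-1$. *)

theory Defs
  imports "HOL-Library.Z2" "HOL-Computational_Algebra.Polynomial"
begin

text \<open>The ring Z_2[y_2, y_3] is represented as (Z_2[y_2])[y_3], i.e. bit poly poly:
  the inner polynomial variable is y_2, the outer one is y_3.\<close>

definition y2 :: "bit poly poly" where "y2 = [:[:0, 1:]:]"
definition y3 :: "bit poly poly" where "y3 = [:0, 1:]"

fun z :: "nat \<Rightarrow> bit poly poly" where
  "z 0 = 0"
| "z (Suc 0) = 0"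
| "z (Suc (Suc 0)) = 1"
| "z (Suc (Suc (Suc 0))) = 0"
| "z (Suc (Suc (Suc (Suc n)))) = y2 * z (Suc (Suc n)) + y3 * z (Suc n)"

end

theory Submission
  imports Defs
begin

lemma zrec: "z (k+3) = y2 * z (k+1) + y3 * z k"
proof (cases k)
  case 0 then show ?thesis by (simp add: numeral_eq_Suc)
next
  case (Suc j) then show ?thesis by (simp add: numeral_eq_Suc)
qed

lemma zadd: "z (m+n+1) = y3 * z n * z m + z (n+2) * z (m+1) + z (n+1) * z (m+2)"
proof (induction n rule: nat_less_induct)
  case (1 n)
  show ?case
  proof (cases "n < 3")
    case True
    then have "n = 0 \<or> n = 1 \<or> n = 2" by auto
    then show ?thesis
    proof (elim disjE)
      assume "n = 2"
      then show ?thesis using zrec[of m] by (simp add: numeral_eq_Suc algebra_simps)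
    qed (simp_all add: numeral_eq_Suc)
  next
    case False
    then obtain k where k: "n = k+3" by (metis add.commute le_add_diff_inverse not_less)
    have IH: "\<And>j. j < n \<Longrightarrow> z (m+j+1) = y3 * z j * z m + z (j+2) * z (m+1) + z (j+1) * z (m+2)"
      using 1 by blast
    have i1: "z (m+(k+1)+1) = y3 * z (k+1) * z m + z (k+1+2) * z (m+1) + z (k+1+1) * z (m+2)"
      using IH[of "k+1"] k by simp
    have i0: "z (m+k+1) = y3 * z k * z m + z (k+2) * z (m+1) + z (k+1) * z (m+2)"
      using IH[of "k"] k by simp
    have e1: "z (m+n+1) = y2 * z (m+k+2) + y3 * z (m+k+1)"
      using zrec[of "m+k+1"] k by (simp add: algebra_simps numeral_eq_Suc)
    have e2: "z (n+2) = y2 * z (k+3) + y3 * z (k+2)"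
      using zrec[of "k+2"] k by (simp add: algebra_simps numeral_eq_Suc)
    have e3: "z (n+1) = y2 * z (k+2) + y3 * z (k+1)"
      using zrec[of "k+1"] k by (simp add: algebra_simps numeral_eq_Suc)
    have e4: "z n = y2 * z (k+1) + y3 * z k"
      using zrec[of k] k by simp
    have i1': "z (m+k+2) = y3 * z (k+1) * z m + z (k+3) * z (m+1) + z (k+2) * z (m+2)"
      using i1 by (simp add: algebra_simps numeral_eq_Suc)
    show ?thesis unfolding e1 e2 e3 e4 i1' i0 by (simp add: algebra_simps)
  qed
qed

lemma two_zero1: "(2::bit poly) = 0" by (simp add: numeral_poly)
lemma two_zero: "(2::bit poly poly) = 0" by (simp add: numeral_poly two_zero1)

lemma double_self: "(p::bit poly poly) + p = 0"
proof -
  have "p + p = 2 * p" by (simp only: mult_2)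
  then show ?thesis by (simp only: two_zero mult_zero_left)
qed

lemma zodd: "z (2*n+1) = y3 * (z n)^2"
proof -
  have "z (n+n+1) = y3 * z n * z n + (z (n+2) * z (n+1) + z (n+2) * z (n+1))"
    using zadd[of n n] by (simp add: algebra_simps)
  then show ?thesis by (simp only: double_self add_0_right power2_eq_square mult_2 mult.assoc)
qed

lemma zeven: "coeff (z (2*k+2)) 0 = [:0,1:]^k"
proof (induction k)
  case 0 then show ?case by (simp add: numeral_eq_Suc)
next
  case (Suc k)
  have "z (2*Suc k+2) = y2 * z (2*k+2) + y3 * z (2*k+1)"
    using zrec[of "2*k+1"] by (simp add: algebra_simps)
  then show ?case using Suc by (simp add: y2_def y3_def)
qed

theorem lemma9p3:
  fixes n :: nat
  assumes "n \<ge> 1"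
    and "\<not> (\<exists>i::nat. n = 2 ^ i - 1)"
  shows "z n \<noteq> 0"
  using assms
proof (induction n rule: nat_less_induct)
  case (1 n)
  show ?case
  proof (cases "even n")
    case True
    then obtain j where j: "n = 2*j" by (metis evenE)
    then have "j \<noteq> 0" using 1(2) by auto
    then obtain k where k: "n = 2*k+2" using j by (metis not0_implies_Suc mult_Suc_right add.commute)
    have "coeff (z n) 0 \<noteq> 0" unfolding k zeven by simp
    then show ?thesis by auto
  next
    case False
    then obtain k where k: "n = 2*k+1" by (metis oddE)
    have "k \<noteq> 0" using 1(3) k by (metis add_0 mult_0_right power_one_right diff_add_inverse2 one_add_one)
    moreover have "\<not> (\<exists>i::nat. k = 2 ^ i - 1)"
    proof
      assume "\<exists>i::nat. k = 2 ^ i - 1"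
      then obtain i where "k = 2^i - 1" by blast
      moreover have "(1::nat) \<le> 2^i" by simp
      ultimately have "n = 2 * 2^i - 1" using k by linarith
      then have "n = 2^(Suc i) - 1" by simp
      then show False using 1(3) by blast
    qed
    ultimately have "z k \<noteq> 0" using 1 k by auto
    moreover have "y3 \<noteq> 0" by (simp add: y3_def)
    ultimately show ?thesis unfolding k zodd by simp
  qed
qed

end
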